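(* For every $n$ such that $Y_n=k\in\{1,\dots,N-1\}$: (1) if $Y_{n+1}=k+1$ then $\begin{pmatrix}U_{n+1}\\ V_{n+1}\end{pmatrix}=\bar B_k^+\begin{pmatrix}U_n\\ V_n\end{pmatrix}$ with $\bar B_k^+=\begin{pmatrix}1-\frac{N-k}{2N(k+1)} & \frac{N-k}{2N(k+1)}\\ 0 & 1\end{pmatrix}$; (2) if $Y_{n+1}=k-1$ then $\begin{pmatrix}U_{n+1}\\ V_{n+1}\end{pmatrix}=\bar B_k^-\begin{pmatrix}U_n\\ V_n\end{pmatrix}$ with $\bar B_k^-=\begin{pmatrix}1 & 0\\ \frac{k}{2N(N-k+1)} & 1-\frac{k}{2N(N-k+1)}\end{pmatrix}$; (3) if $Y_{n+1}=k$ then $\begin{pmatrix}U_{n+1}\\ V_{n+1}\end{pmatrix}=\bar B_k^{(0)}\begin{pmatrix}U_n\\ V_n\end{pmatrix}$ with $$\bar B_k^{(0)}=\frac{k^2}{k^2+(1+s)(N-k)^2}\begin{pmatrix}1-\frac{N-k}{2kN} & \frac{N-k}{2kN}\\ 0 & 1\end{pmatrix}+\frac{(1+s)(N-k)^2}{k^2+(1+s)(N-k)^2}\begin{pmatrix}1 & 0\\ \frac{k}{2N(N-k)} & 1-\frac{k}{2N(N-k)}\end{pmatrix}.$$ In particular, if $T^Y_0<T^Y_N$ then $(U_{T^Y_0},V_{T^Y_0})^T=\begin{pmatrix}1&0\\ \frac{1}{2N^2}&\frac{2N^2-1}{2N^2}\end{pmatrix}(U_{T^Y_0-1},V_{T^Y_0-1})^T$,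 and if $T^Y_N<T^Y_0$ then $(U_{T^Y_N},V_{T^Y_N})^T=\begin{pmatrix}\frac{2N^2-1}{2N^2}&\frac{1}{2N^2}\\ 0&1\end{pmatrix}(U_{T^Y_N-1},V_{T^Y_N-1})^T$.
   Context: Biparental Moran model with selection at death. Fix an integer $N\ge 2$ and a real $s>0$; let $I=\{1,\dots,N\}$ be the set of sites, each occupied by one individual which is either advantaged or disadvantaged. Let $\mathcal{Y}_n\subseteq I$ be the set of sites of advantaged individuals at time $n\in\mathbb{Z}_+$ ($\mathcal{Y}_0$ is a given initial set) and $Y_n=|\mathcal{Y}_n|$. At each time step $n$, conditionally on the past: a "mother" site $\mu_n$ and a "father" site $\pi_n$ are drawn independently and uniformly from $I$, and independently a site $\kappa_n$ is drawn with $\mathbb{P}(\kappa_n=i)$ proportional to the death weight of $i$, which equals $1$ if $i\in\mathcal{Y}_n$ and $1+s$ if $i\notin\mathcal{Y}_n$. The individual at $\kappa_n$ dies and is replaced by an offspring of $\mu_n$ and $\pi_n$, whose type is that of the mother: $\mathcal{Y}_{n+1}=\mathcal{Y}_n\cup\{\kappa_n\}$ if $\mu_n\in\mathcal{Y}_n$ and $\mathcal{Y}_{n+1}=\mathcal{Y}_n\setminus\{\kappa_n\}$ if $\mu_n\notin\mathcal{Y}_n$; all other individuals are unchanged. Pedigree and ancestral weights: $\mathcal{G}_N$ denotes the random oriented graph on $I\times\mathbb{Z}_+$ with, for each $n$, arrows from $(\kappa_n,n+1)$ to $(\mu_n,n)$ and to $(\pi_n,n)$, and from $(i,n+1)$ to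 $(i,n)$ for every $i\neq\kappa_n$. For $n\ge0$, the genealogy of a neutral gene sampled at time $n$ is the process $(X^{(n)}_k)_{0\le k\le n}$ which, conditionally on $\mathcal{G}_N$, is a Markov chain with: if $X^{(n)}_k=x\neq\kappa_{n-k-1}$ then $X^{(n)}_{k+1}=x$, and if $X^{(n)}_k=\kappa_{n-k-1}$ then $X^{(n)}_{k+1}$ equals $\mu_{n-k-1}$ or $\pi_{n-k-1}$ with probability $1/2$ each. Set $A_n(i,j)=\mathbb{P}(X^{(n)}_n=j\mid X^{(n)}_0=i,\mathcal{G}_N)$ and $$\Xi^A_n=\frac{1}{Y_n}\sum_{l\in\mathcal{Y}_n}\sum_{l'\in\mathcal{Y}_0}A_n(l,l'),\qquad \Xi^B_n=\frac{1}{N-Y_n}\sum_{l\notin\mathcal{Y}_n}\sum_{l'\in\mathcal{Y}_0}A_n(l,l')$$ (when the denominators are nonzero). Let $\mathcal{F}^Y_n=\sigma(Y_0,\dots,Y_n)$, $U_n=\mathbb{E}(\Xi^A_n\mid\mathcal{F}^Y_n)$, $V_n=\mathbb{E}(\Xi^B_n\mid\mathcal{F}^Y_n)$ (so $U_0=1$, $V_0=0$). For $y\in\{0,\dots,N\}$, $T^Y_y=\inf\{n:Y_n=y\}$ (with $\inf\emptyset=\infty$). *)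

theory Defs
  imports "HOL-Probability.Probability"
begin

text \<open>Biparental Moran model with selection at death. Sites are I = {1..N}.
A draw at one time step is a triple (mother, father, killed site).\<close>

type_synonym draw = "nat \<times> nat \<times> nat"

definition dw :: "real \<Rightarrow> nat set \<Rightarrow> nat \<Rightarrow> real" where
  "dw s Y i = (if i \<in> Y then 1 else 1 + s)"

definition kill_pmf :: "nat \<Rightarrow> real \<Rightarrow> nat set \<Rightarrow> nat pmf" where
  "kill_pmf N s Y = embed_pmf (\<lambda>i. if i \<in> {1..N}
      then dw s Y i / (\<Sum>j\<in>{1..N}. dw s Y j) else 0)"

definition draw_pmf :: "nat \<Rightarrow> real \<Rightarrow> nat set \<Rightarrow> draw pmf" where
  "draw_pmf N s Y =
     bind_pmf (pmf_of_set {1..N}) (\<lambda>mu.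
     bind_pmf (pmf_of_set {1..N}) (\<lambda>pa.
     map_pmf (\<lambda>ka. (mu, pa, ka)) (kill_pmf N s Y)))"

definition step :: "nat set \<Rightarrow> draw \<Rightarrow> nat set" where
  "step Y d = (case d of (mu, pa, ka) \<Rightarrow>
      if mu \<in> Y then insert ka Y else Y - {ka})"

fun paths :: "nat \<Rightarrow> real \<Rightarrow> nat \<Rightarrow> nat set \<Rightarrow> draw list pmf" where
  "paths N s 0 Y = return_pmf []"
| "paths N s (Suc n) Y =
     bind_pmf (draw_pmf N s Y) (\<lambda>d. map_pmf (\<lambda>ds. d # ds) (paths N s n (step Y d)))"

text \<open>The advantaged set after the draws ds, and the path (Y_0, ..., Y_n) of its sizes.\<close>
definition Yset :: "nat set \<Rightarrow> draw list \<Rightarrow> nat set" where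
  "Yset Y0 ds = foldl step Y0 ds"

definition ypath :: "nat set \<Rightarrow> draw list \<Rightarrow> nat list" where
  "ypath Y0 ds = map (\<lambda>m. card (Yset Y0 (take m ds))) [0..<Suc (length ds)]"

text \<open>One backward step of the neutral-gene genealogy through draw d:
from site x (at time m+1) to site y (at time m).\<close>
definition gkernel :: "draw \<Rightarrow> nat \<Rightarrow> nat \<Rightarrow> real" where
  "gkernel d x y = (case d of (mu, pa, ka) \<Rightarrow>
      if x \<noteq> ka then (if y = x then 1 else 0)
      else (if y = mu then 1/2 else 0) + (if y = pa then 1/2 else 0))"

text \<open>Backward composition over a list of draws given in reverse chronological order.\<close>
fun Arev :: "nat \<Rightarrow> draw list \<Rightarrow> nat \<Rightarrow> nat \<Rightarrow> real" where
  "Arev N [] i j = (if i = j then 1 else 0)"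
| "Arev N (d # rds) i j = (\<Sum>x\<in>{1..N}. gkernel d i x * Arev N rds x j)"

text \<open>A_n(i,j) = P(X^(n)_n = j | X^(n)_0 = i, pedigree), where ds = draws at times 0..n-1.\<close>
definition Agen :: "nat \<Rightarrow> draw list \<Rightarrow> nat \<Rightarrow> nat \<Rightarrow> real" where
  "Agen N ds = Arev N (rev ds)"

definition XiA :: "nat \<Rightarrow> nat set \<Rightarrow> draw list \<Rightarrow> real" where
  "XiA N Y0 ds = (\<Sum>l\<in>Yset Y0 ds. \<Sum>l'\<in>Y0. Agen N ds l l') / real (card (Yset Y0 ds))"

definition XiB :: "nat \<Rightarrow> nat set \<Rightarrow> draw list \<Rightarrow> real" where
  "XiB N Y0 ds = (\<Sum>l\<in>{1..N} - Yset Y0 ds. \<Sum>l'\<in>Y0. Agen N ds l l')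
                   / real (N - card (Yset Y0 ds))"

text \<open>U_n and V_n: conditional expectations of Xi^A_n, Xi^B_n given the observed
path (Y_0,...,Y_n) = ys (meaningful on paths of positive probability).\<close>
definition Ucond :: "nat \<Rightarrow> real \<Rightarrow> nat set \<Rightarrow> nat \<Rightarrow> nat list \<Rightarrow> real" where
  "Ucond N s Y0 n ys =
     measure_pmf.expectation (cond_pmf (paths N s n Y0) {ds. ypath Y0 ds = ys}) (XiA N Y0)"

definition Vcond :: "nat \<Rightarrow> real \<Rightarrow> nat set \<Rightarrow> nat \<Rightarrow> nat list \<Rightarrow> real" where
  "Vcond N s Y0 n ys =
     measure_pmf.expectation (cond_pmf (paths N s n Y0) {ds. ypath Y0 ds = ys}) (XiB N Y0)"

definition possible :: "nat \<Rightarrow> real \<Rightarrow> nat set \<Rightarrow> nat \<Rightarrow> nat list \<Rightarrow> bool" where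
  "possible N s Y0 n ys \<longleftrightarrow> set_pmf (paths N s n Y0) \<inter> {ds. ypath Y0 ds = ys} \<noteq> {}"

end

theory Submission imports Defs begin

lemma dw_pos: "s > 0 \<Longrightarrow> dw s Y i > 0"
  by (simp add: dw_def)

lemma Z_pos: assumes "N \<ge> 1" "s > 0" shows "(\<Sum>j\<in>{1..N}. dw s Y j) > 0"
  using assms by (intro sum_pos) (auto simp: dw_pos)

lemma pmf_kill:
  assumes "N \<ge> 1" "s > 0"
  shows "pmf (kill_pmf N s Y) i = (if i \<in> {1..N} then dw s Y i / (\<Sum>j\<in>{1..N}. dw s Y j) else 0)"
proof -
  let ?Z = "(\<Sum>j\<in>{1..N}. dw s Y j)"
  let ?f = "(\<lambda>i. if i \<in> {1..N} then dw s Y i / ?Z else 0)"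
  have Z: "?Z > 0" using Z_pos[OF assms] .
  have nn: "\<And>x. 0 \<le> ?f x" using Z assms by (auto simp: dw_def)
  have "(\<integral>\<^sup>+x. ennreal (?f x) \<partial>count_space UNIV) = (\<Sum>x\<in>{1..N}. ennreal (?f x))"
    by (rule nn_integral_count_space') auto
  also have "\<dots> = ennreal (\<Sum>x\<in>{1..N}. ?f x)"
    by (rule sum_ennreal) (metis nn)
  also have "(\<Sum>x\<in>{1..N}. ?f x) = 1"
    using Z by (simp add: sum_divide_distrib[symmetric])
  finally have "(\<integral>\<^sup>+x. ennreal (?f x) \<partial>count_space UNIV) = 1" by simp
  then show ?thesis unfolding kill_pmf_def
    by (subst pmf_embed_pmf) (use nn in auto)
qed

lemma set_kill: assumes "N \<ge> 1" "s > 0" shows "set_pmf (kill_pmf N s Y) \<subseteq> {1..N}"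
  using assms by (auto simp: set_pmf_eq pmf_kill split: if_splits)

lemma set_draw: assumes "N \<ge> 1" "s > 0"
  shows "set_pmf (draw_pmf N s Y) \<subseteq> {1..N} \<times> {1..N} \<times> {1..N}"
  using set_kill[OF assms] assms unfolding draw_pmf_def
  by (auto simp: set_pmf_of_set)

lemma fin_draw: assumes "N \<ge> 1" "s > 0" shows "finite (set_pmf (draw_pmf N s Y))"
  using set_draw[OF assms] by (rule finite_subset) auto

lemma E_draw:
  assumes "N \<ge> 1" "s > 0"
  shows "measure_pmf.expectation (draw_pmf N s Y) g =
    (\<Sum>mu\<in>{1..N}. \<Sum>pa\<in>{1..N}. \<Sum>ka\<in>{1..N}. dw s Y ka * g (mu, pa, ka))
      / (real N * real N * (\<Sum>j\<in>{1..N}. dw s Y j))"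
proof -
  have ne: "{1..N} \<noteq> {}" using assms by auto
  have fk: "finite (set_pmf (kill_pmf N s Y))" using set_kill[OF assms] by (rule finite_subset) auto
  have k: "measure_pmf.expectation (kill_pmf N s Y) h = (\<Sum>ka\<in>{1..N}. dw s Y ka * h ka) / (\<Sum>j\<in>{1..N}. dw s Y j)" for h :: "nat \<Rightarrow> real"
    by (subst integral_measure_pmf[of "{1..N}"]) 
       (use set_kill[OF assms, of Y] in \<open>auto simp: pmf_kill[OF assms] sum_divide_distrib\<close>)
  show ?thesis unfolding draw_pmf_def
    apply (subst pmf_expectation_bind_pmf_of_set)
    using ne fk apply (auto simp: set_pmf_of_set)[3]
    apply (subst pmf_expectation_bind_pmf_of_set)
    using ne fk apply (auto simp: set_pmf_of_set)[3]
    apply (simp add: k sum_divide_distrib[symmetric] sum_distrib_left[symmetric] field_simps)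
    done
qed

lemma gk_row:
  assumes "l \<in> {1..N}" "mu \<in> {1..N}" "pa \<in> {1..N}"
  shows "(\<Sum>x\<in>{1..N}. gkernel (mu,pa,ka) l x * F x) = (if l = ka then (F mu + F pa)/2 else F l)"
proof (cases "l = ka")
  case True
  have "\<And>x. gkernel (mu,pa,ka) l x * F x = (if x = mu then F x/2 else 0) + (if x = pa then F x/2 else 0)"
    using True by (simp add: gkernel_def)
  then show ?thesis using True assms by (simp add: sum.distrib)
next
  case False
  have "\<And>x. gkernel (mu,pa,ka) l x * F x = (if x = l then F x else 0)"
    using False by (simp add: gkernel_def)
  then show ?thesis using False assms by simp
qed

lemma sum_if_eq:
  assumes "finite L"
  shows "(\<Sum>l\<in>L. if l = ka then c else F l) = sum F L + (if ka \<in> L then c - F ka else (0::real))"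
proof (cases "ka \<in> L")
  case True
  then show ?thesis using assms
    by (simp add: sum.remove[OF assms True] sum.remove[OF assms True, of F])
next
  case False
  then have "(\<Sum>l\<in>L. if l = ka then c else F l) = sum F L" by (intro sum.cong) auto
  then show ?thesis using False by simp
qed

lemma newsum:
  assumes "L \<subseteq> {1..N}" "mu \<in> {1..N}" "pa \<in> {1..N}"
  shows "(\<Sum>l\<in>L. \<Sum>x\<in>{1..N}. gkernel (mu,pa,ka) l x * F x)
    = sum F L + (if ka \<in> L then (F mu + F pa)/2 - F ka else 0)"
proof -
  have "(\<Sum>l\<in>L. \<Sum>x\<in>{1..N}. gkernel (mu,pa,ka) l x * F x) = (\<Sum>l\<in>L. if l = ka then (F mu + F pa)/2 else F l)"
    using assms by (intro sum.cong refl gk_row) auto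
  also have "\<dots> = sum F L + (if ka \<in> L then (F mu + F pa)/2 - F ka else 0)" by (rule sum_if_eq) (use assms finite_subset in auto)
  finally show ?thesis .
qed

lemma Z_eq: assumes "Y \<subseteq> {1..N}"
  shows "(\<Sum>j\<in>{1..N}. dw s Y j) = real (card Y) + (1 + s) * real (N - card Y)"
proof -
  have f: "finite Y" using assms finite_subset by blast
  have "(\<Sum>j\<in>{1..N}. dw s Y j) = (\<Sum>j\<in>{1..N} - Y. dw s Y j) + (\<Sum>j\<in>Y. dw s Y j)"
    by (rule sum.subset_diff[OF assms]) auto
  also have "(\<Sum>j\<in>Y. dw s Y j) = real (card Y)" by (simp add: dw_def)
  also have "(\<Sum>j\<in>{1..N} - Y. dw s Y j) = (1+s) * real (card ({1..N} - Y))" by (simp add: dw_def)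
  also have "card ({1..N} - Y) = N - card Y" using assms f by (simp add: card_Diff_subset)
  finally show ?thesis by simp
qed

lemma block:
  fixes g :: "nat \<times> nat \<times> nat \<Rightarrow> real"
  assumes "finite M" "finite P" "finite K"
    and "\<And>mu pa ka. mu \<in> M \<Longrightarrow> pa \<in> P \<Longrightarrow> ka \<in> K \<Longrightarrow> g (mu,pa,ka) = \<alpha> + \<beta> * F mu + \<gamma> * F pa + \<delta> * F ka"
  shows "(\<Sum>mu\<in>M. \<Sum>pa\<in>P. \<Sum>ka\<in>K. g (mu,pa,ka)) =
     real (card M) * real (card P) * real (card K) * \<alpha> + \<beta> * real (card P) * real (card K) * sum F M
     + \<gamma> * real (card M) * real (card K) * sum F P + \<delta> * real (card M) * real (card P) * sum F K"
  (is "_ = ?R")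
proof -
  have "(\<Sum>mu\<in>M. \<Sum>pa\<in>P. \<Sum>ka\<in>K. g (mu,pa,ka)) = (\<Sum>mu\<in>M. \<Sum>pa\<in>P. \<Sum>ka\<in>K. \<alpha> + \<beta> * F mu + \<gamma> * F pa + \<delta> * F ka)"
    using assms(4) by (intro sum.cong refl) auto
  also have "\<dots> = ?R"
    by (simp add: sum.distrib sum_distrib_left[symmetric] sum_distrib_right[symmetric] algebra_simps)
  finally show ?thesis .
qed

lemma decomp:
  fixes g :: "nat \<times> nat \<times> nat \<Rightarrow> real"
  assumes "Y \<subseteq> {1..N}"
  shows "(\<Sum>mu\<in>{1..N}. \<Sum>pa\<in>{1..N}. \<Sum>ka\<in>{1..N}. dw s Y ka * g (mu, pa, ka)) =
     (\<Sum>mu\<in>Y. \<Sum>pa\<in>{1..N}. \<Sum>ka\<in>Y. g (mu,pa,ka))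
   + (1+s) * (\<Sum>mu\<in>Y. \<Sum>pa\<in>{1..N}. \<Sum>ka\<in>{1..N}-Y. g (mu,pa,ka))
   + (\<Sum>mu\<in>{1..N}-Y. \<Sum>pa\<in>{1..N}. \<Sum>ka\<in>Y. g (mu,pa,ka))
   + (1+s) * (\<Sum>mu\<in>{1..N}-Y. \<Sum>pa\<in>{1..N}. \<Sum>ka\<in>{1..N}-Y. g (mu,pa,ka))"
proof -
  have sp: "\<And>h :: nat \<Rightarrow> real. sum h {1..N} = sum h ({1..N} - Y) + sum h Y"
    by (rule sum.subset_diff[OF assms]) auto
  have inner: "(\<Sum>ka\<in>{1..N}. dw s Y ka * g (mu, pa, ka)) = (\<Sum>ka\<in>Y. g (mu,pa,ka)) + (1+s) * (\<Sum>ka\<in>{1..N}-Y. g (mu,pa,ka))" for mu pa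
    by (subst sp) (simp add: dw_def sum_distrib_left)
  define A where "A = (\<lambda>mu. \<Sum>pa\<in>{1..N}. \<Sum>ka\<in>Y. g (mu,pa,ka))"
  define B where "B = (\<lambda>mu. \<Sum>pa\<in>{1..N}. \<Sum>ka\<in>{1..N}-Y. g (mu,pa,ka))"
  have "(\<Sum>mu\<in>{1..N}. \<Sum>pa\<in>{1..N}. \<Sum>ka\<in>{1..N}. dw s Y ka * g (mu, pa, ka))
     = sum A {1..N} + (1+s) * sum B {1..N}"
    unfolding inner sum.distrib A_def B_def by (simp add: sum_distrib_left)
  also have "\<dots> = (sum A ({1..N} - Y) + sum A Y) + (1+s) * (sum B ({1..N} - Y) + sum B Y)"
    using sp[of A] sp[of B] by simp
  finally show ?thesis unfolding A_def B_def by (simp add: algebra_simps)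
qed

definition Anew :: "nat \<Rightarrow> nat set \<Rightarrow> (nat \<Rightarrow> real) \<Rightarrow> draw \<Rightarrow> real" where
  "Anew N Y F d = (\<Sum>l\<in>step Y d. \<Sum>x\<in>{1..N}. gkernel d l x * F x) / real (card (step Y d))"

definition Bnew :: "nat \<Rightarrow> nat set \<Rightarrow> (nat \<Rightarrow> real) \<Rightarrow> draw \<Rightarrow> real" where
  "Bnew N Y F d = (\<Sum>l\<in>{1..N} - step Y d. \<Sum>x\<in>{1..N}. gkernel d l x * F x) / real (N - card (step Y d))"

lemma step_YY: "mu \<in> Y \<Longrightarrow> ka \<in> Y \<Longrightarrow> step Y (mu,pa,ka) = Y"
  by (auto simp: step_def)
lemma step_YB: "mu \<in> Y \<Longrightarrow> ka \<notin> Y \<Longrightarrow> step Y (mu,pa,ka) = insert ka Y"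
  by (auto simp: step_def)
lemma step_BY: "mu \<notin> Y \<Longrightarrow> step Y (mu,pa,ka) = Y - {ka}"
  by (auto simp: step_def)
lemma step_BB: "mu \<notin> Y \<Longrightarrow> ka \<notin> Y \<Longrightarrow> step Y (mu,pa,ka) = Y"
  by (auto simp: step_def)

lemma sum_compl_ins:
  fixes N :: nat and F :: "nat \<Rightarrow> real"
  assumes "Y \<subseteq> {1..N}" "ka \<in> {1..N}" "ka \<notin> Y"
  shows "sum F ({1..N} - insert ka Y) = sum F ({1..N} - Y) - F ka"
proof -
  have e: "{1..N} - insert ka Y = ({1..N} - Y) - {ka}" by auto
  show ?thesis unfolding e using assms by (subst sum_diff1) auto
qed

lemma sum_compl_del:
  fixes N :: nat and F :: "nat \<Rightarrow> real"
  assumes "Y \<subseteq> {1..N}" "ka \<in> Y"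
  shows "sum F ({1..N} - (Y - {ka})) = sum F ({1..N} - Y) + F ka"
proof -
  have e: "{1..N} - (Y - {ka}) = insert ka ({1..N} - Y)" using assms by auto
  show ?thesis unfolding e using assms by (subst sum.insert) auto
qed

lemma sum_I_split: fixes N :: nat and F :: "nat \<Rightarrow> real" shows "Y \<subseteq> {1..N} \<Longrightarrow> sum F {1..N} = sum F Y + sum F ({1..N} - Y)"
  by (subst sum.subset_diff[of Y]) auto

lemma alg_up1:
  fixes K M s SY SB a1 a2 a3 :: real
  assumes "K > 0" "M > 1" "s > 0"
  shows "(0 + (1+s) * (K * (K+M) * M * (a1 * SY / (K+1) + a2 * SB / (M-1) + a3)
     + a1 / (2 * (K+1)) * (K+M) * M * SY
     + a1 / (2 * (K+1)) * K * M * (SY + SB)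
     + (- a2 / (M-1)) * K * (K+M) * SB) + 0 + (1+s) * 0) / ((K+M) * (K+M) * (K + (1+s) * M))
 = (1+s) * K * M / ((K+M) * (K + (1+s) * M)) *
      (a1 * ((1 - M / (2 * (K+M) * (K+1))) * (SY / K)
             + M / (2 * (K+M) * (K+1)) * (SB / M))
       + a2 * (SB / M) + a3)"
proof -
  have p: "(1+s)*M > 0" using assms by simp
  have "K + (1+s)*M > 0" using p assms by linarith
  moreover have "K + 1 \<noteq> 0" "K + M \<noteq> 0" "K \<noteq> 0" "M \<noteq> 0" "M - 1 \<noteq> 0" using assms by auto
  ultimately show ?thesis by (simp add: divide_simps) (simp add: algebra_simps)
qed

lemma alg_up2:
  fixes K M s SY SB a1 a2 a3 :: real
  assumes "K > 0" "M = 1" "s > 0"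
  shows "(0 + (1+s) * (K * (K+M) * M * (a1 * SY / (K+1) + a2 * SB / 0 + a3)
     + a1 / (2 * (K+1)) * (K+M) * M * SY
     + a1 / (2 * (K+1)) * K * M * (SY + SB)
     + (- a2 / 0) * K * (K+M) * SB) + 0 + (1+s) * 0) / ((K+M) * (K+M) * (K + (1+s) * M))
 = (1+s) * K * M / ((K+M) * (K + (1+s) * M)) *
      (a1 * ((1 - M / (2 * (K+M) * (K+1))) * (SY / K)
             + M / (2 * (K+M) * (K+1)) * (SB / M))
       + a2 * 0 + a3)"
proof -
  have "K + (1+s)*M > 0" "K + 1 \<noteq> 0" "K + M \<noteq> 0" "K \<noteq> 0" "M \<noteq> 0" using assms by auto
  then show ?thesis by (simp add: divide_simps) (simp add: algebra_simps)
qed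

lemma up_draw:
  assumes N1: "N \<ge> 1" and s: "s > 0" and Y: "Y \<subseteq> {1..N}" and k: "card Y = k" "1 \<le> k" "k < N"
  shows "measure_pmf.expectation (draw_pmf N s Y)
      (\<lambda>d. if card (step Y d) = k + 1 then a1 * Anew N Y F d + a2 * Bnew N Y F d + a3 else 0)
    = (1+s) * real k * real (N - k) / (real N * (real k + (1+s) * real (N-k))) *
      (a1 * ((1 - real (N - k) / (2 * real N * real (k + 1))) * (sum F Y / real k)
             + real (N - k) / (2 * real N * real (k + 1)) * (sum F ({1..N} - Y) / real (N - k)))
       + a2 * (if k + 1 < N then sum F ({1..N} - Y) / real (N - k) else 0) + a3)"
proof -
  have fY: "finite Y" using Y finite_subset by blast
  let ?g = "\<lambda>d. if card (step Y d) = k + 1 then a1 * Anew N Y F d + a2 * Bnew N Y F d + a3 else 0"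
  let ?SY = "sum F Y" and ?SB = "sum F ({1..N} - Y)"
  have cB: "card ({1..N} - Y) = N - k" using Y fY k by (simp add: card_Diff_subset)
  have b1: "(\<Sum>mu\<in>Y. \<Sum>pa\<in>{1..N}. \<Sum>ka\<in>Y. ?g (mu,pa,ka)) = 0"
    using k by (intro sum.neutral ballI) (simp add: step_YY)
  have b2: "(\<Sum>mu\<in>{1..N}-Y. \<Sum>pa\<in>{1..N}. \<Sum>ka\<in>Y. ?g (mu,pa,ka)) = 0"
    using k fY by (intro sum.neutral ballI) (auto simp: step_BY)
  have b3: "(\<Sum>mu\<in>{1..N}-Y. \<Sum>pa\<in>{1..N}. \<Sum>ka\<in>{1..N}-Y. ?g (mu,pa,ka)) = 0"
    using k by (intro sum.neutral ballI) (simp add: step_BB)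
  have b4: "(\<Sum>mu\<in>Y. \<Sum>pa\<in>{1..N}. \<Sum>ka\<in>{1..N}-Y. ?g (mu,pa,ka)) =
     real k * real N * real (N - k) * (a1 * ?SY / real (k+1) + a2 * ?SB / real (N - (k+1)) + a3)
     + a1 / (2 * real (k+1)) * real N * real (N - k) * ?SY
     + a1 / (2 * real (k+1)) * real k * real (N - k) * (?SY + ?SB)
     + (- a2 / real (N - (k+1))) * real k * real N * ?SB"
  proof -
    have "(\<Sum>mu\<in>Y. \<Sum>pa\<in>{1..N}. \<Sum>ka\<in>{1..N}-Y. ?g (mu,pa,ka)) =
      real (card Y) * real (card {1..N}) * real (card ({1..N}-Y)) * (a1 * ?SY / real (k+1) + a2 * ?SB / real (N - (k+1)) + a3)
      + a1 / (2 * real (k+1)) * real (card {1..N}) * real (card ({1..N}-Y)) * sum F Y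
      + a1 / (2 * real (k+1)) * real (card Y) * real (card ({1..N}-Y)) * sum F {1..N}
      + (- a2 / real (N - (k+1))) * real (card Y) * real (card {1..N}) * sum F ({1..N}-Y)"
    proof (rule block)
      fix mu pa ka assume h: "mu \<in> Y" "pa \<in> {1..N}" "ka \<in> {1..N} - Y"
      have mu: "mu \<in> {1..N}" using h Y by auto
      have st: "step Y (mu,pa,ka) = insert ka Y" using h by (simp add: step_YB)
      have c: "card (step Y (mu,pa,ka)) = k + 1" using st h fY k by simp
      have A: "Anew N Y F (mu,pa,ka) = (?SY + (F mu + F pa)/2) / real (k+1)"
        unfolding Anew_def c using h Y fY mu by (subst st, subst newsum) auto
      have sc: "sum F ({1..N} - insert ka Y) = ?SB - F ka" using h Y by (intro sum_compl_ins) auto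
      have B: "Bnew N Y F (mu,pa,ka) = (?SB - F ka) / real (N - (k+1))"
        unfolding Bnew_def c using h Y fY mu
        apply (subst st, subst newsum)
        apply auto[3]
        apply (simp only: sc)
        apply simp
        done
      show "?g (mu,pa,ka) = (a1 * ?SY / real (k+1) + a2 * ?SB / real (N - (k+1)) + a3)
         + a1 / (2 * real (k+1)) * F mu + a1 / (2 * real (k+1)) * F pa + (- a2 / real (N - (k+1))) * F ka"
        by (simp add: c A B add_divide_distrib diff_divide_distrib algebra_simps)
    qed (use fY in auto)
    then show ?thesis using cB k sum_I_split[OF Y, of F] by simp
  qed
  have E: "measure_pmf.expectation (draw_pmf N s Y) ?g = (0 + (1+s) * (real k * real N * real (N - k) * (a1 * ?SY / real (k+1) + a2 * ?SB / real (N - (k+1)) + a3)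
     + a1 / (2 * real (k+1)) * real N * real (N - k) * ?SY
     + a1 / (2 * real (k+1)) * real k * real (N - k) * (?SY + ?SB)
     + (- a2 / real (N - (k+1))) * real k * real N * ?SB) + 0 + (1+s) * 0) / (real N * real N * (real k + (1+s) * real (N - k)))"
    apply (subst E_draw[OF N1 s])
    apply (subst decomp[OF Y])
    apply (simp only: b1 b2 b3 b4 Z_eq[OF Y] k(1))
    done
  show ?thesis
  proof -
    define K where "K = real k"
    define M where "M = real (N - k)"
    have eN: "real N = K + M" "real (k+1) = K + 1" using k unfolding K_def M_def by auto
    have pK: "K > 0" "M > 0" using k unfolding K_def M_def by auto
    have "(1+s)*M > 0" using pK s by simp
    then have nz: "K + 1 \<noteq> 0" "K + M \<noteq> 0" "K + (1+s)*M \<noteq> 0" "K \<noteq> 0" "M \<noteq> 0"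
      using pK by auto
    show ?thesis
    proof (cases "k + 1 < N")
      case True
      have e1: "real (N - (k+1)) = M - 1" using True unfolding M_def by auto
      have "M > 1" using True unfolding M_def by auto
      then show ?thesis unfolding E e1 eN K_def[symmetric] M_def[symmetric] if_P[OF True]
        by (intro alg_up1) (use pK s in auto)
    next
      case False
      have e1: "real (N - (k+1)) = 0" using False by auto
      have "M = 1" using False k unfolding M_def by auto
      then show ?thesis unfolding E e1 eN K_def[symmetric] M_def[symmetric] if_not_P[OF False]
        by (intro alg_up2) (use pK s in auto)
    qed
  qed
qed


lemma alg_down1:
  fixes K M s SY SB a1 a2 a3 :: real
  assumes "K > 1" "M > 0" "s > 0"
  shows "(0 + (1+s) * 0 + (M * (K+M) * K * (a1 * SY / (K-1) + a2 * SB / (M+1) + a3)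
     + a2 / (2 * (M+1)) * (K+M) * K * SB
     + a2 / (2 * (M+1)) * M * K * (SY + SB)
     + (- a1 / (K-1)) * M * (K+M) * SY) + (1+s) * 0) / ((K+M) * (K+M) * (K + (1+s) * M))
 = K * M / ((K+M) * (K + (1+s) * M)) *
      (a1 * (SY / K)
       + a2 * (K / (2 * (K+M) * (M+1)) * (SY / K) + (1 - K / (2 * (K+M) * (M+1))) * (SB / M)) + a3)"
proof -
  have p: "(1+s)*M > 0" using assms by simp
  have "K + (1+s)*M > 0" using p assms by linarith
  moreover have "M + 1 \<noteq> 0" "K + M \<noteq> 0" "K \<noteq> 0" "M \<noteq> 0" "K - 1 \<noteq> 0" using assms by auto
  ultimately show ?thesis by (simp add: divide_simps) (simp add: algebra_simps)
qed

lemma alg_down2: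
  fixes K M s SY SB a1 a2 a3 :: real
  assumes "K = 1" "M > 0" "s > 0"
  shows "(0 + (1+s) * 0 + (M * (K+M) * K * (a1 * SY / 0 + a2 * SB / (M+1) + a3)
     + a2 / (2 * (M+1)) * (K+M) * K * SB
     + a2 / (2 * (M+1)) * M * K * (SY + SB)
     + (- a1 / 0) * M * (K+M) * SY) + (1+s) * 0) / ((K+M) * (K+M) * (K + (1+s) * M))
 = K * M / ((K+M) * (K + (1+s) * M)) *
      (a1 * 0
       + a2 * (K / (2 * (K+M) * (M+1)) * (SY / K) + (1 - K / (2 * (K+M) * (M+1))) * (SB / M)) + a3)"
proof -
  have p: "(1+s)*M > 0" using assms by simp
  have "K + (1+s)*M > 0" using p assms by linarith
  moreover have "M + 1 \<noteq> 0" "K + M \<noteq> 0" "K \<noteq> 0" "M \<noteq> 0" using assms by auto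
  ultimately show ?thesis by (simp add: divide_simps) (simp add: algebra_simps)
qed

lemma down_draw:
  assumes N1: "N \<ge> 1" and s: "s > 0" and Y: "Y \<subseteq> {1..N}" and k: "card Y = k" "1 \<le> k" "k < N"
  shows "measure_pmf.expectation (draw_pmf N s Y)
      (\<lambda>d. if card (step Y d) = k - 1 then a1 * Anew N Y F d + a2 * Bnew N Y F d + a3 else 0)
    = real k * real (N - k) / (real N * (real k + (1+s) * real (N-k))) *
      (a1 * (if 1 < k then sum F Y / real k else 0)
       + a2 * (real k / (2 * real N * real (N - k + 1)) * (sum F Y / real k)
             + (1 - real k / (2 * real N * real (N - k + 1))) * (sum F ({1..N} - Y) / real (N - k)))
       + a3)"
proof -
  have fY: "finite Y" using Y finite_subset by blast
  let ?g = "\<lambda>d. if card (step Y d) = k - 1 then a1 * Anew N Y F d + a2 * Bnew N Y F d + a3 else 0"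
  let ?SY = "sum F Y" and ?SB = "sum F ({1..N} - Y)"
  have cB: "card ({1..N} - Y) = N - k" using Y fY k by (simp add: card_Diff_subset)
  have b1: "(\<Sum>mu\<in>Y. \<Sum>pa\<in>{1..N}. \<Sum>ka\<in>Y. ?g (mu,pa,ka)) = 0"
    using k by (intro sum.neutral ballI) (simp add: step_YY)
  have b4: "(\<Sum>mu\<in>Y. \<Sum>pa\<in>{1..N}. \<Sum>ka\<in>{1..N}-Y. ?g (mu,pa,ka)) = 0"
    using k fY by (intro sum.neutral ballI) (auto simp: step_YB)
  have b3: "(\<Sum>mu\<in>{1..N}-Y. \<Sum>pa\<in>{1..N}. \<Sum>ka\<in>{1..N}-Y. ?g (mu,pa,ka)) = 0"
    using k by (intro sum.neutral ballI) (simp add: step_BB)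
  have b2: "(\<Sum>mu\<in>{1..N}-Y. \<Sum>pa\<in>{1..N}. \<Sum>ka\<in>Y. ?g (mu,pa,ka)) =
     real (N - k) * real N * real k * (a1 * ?SY / real (k-1) + a2 * ?SB / real (N - (k-1)) + a3)
     + a2 / (2 * real (N - (k-1))) * real N * real k * ?SB
     + a2 / (2 * real (N - (k-1))) * real (N - k) * real k * (?SY + ?SB)
     + (- a1 / real (k-1)) * real (N - k) * real N * ?SY"
  proof -
    have "(\<Sum>mu\<in>{1..N}-Y. \<Sum>pa\<in>{1..N}. \<Sum>ka\<in>Y. ?g (mu,pa,ka)) =
      real (card ({1..N}-Y)) * real (card {1..N}) * real (card Y) * (a1 * ?SY / real (k-1) + a2 * ?SB / real (N - (k-1)) + a3)
      + a2 / (2 * real (N - (k-1))) * real (card {1..N}) * real (card Y) * sum F ({1..N}-Y)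
      + a2 / (2 * real (N - (k-1))) * real (card ({1..N}-Y)) * real (card Y) * sum F {1..N}
      + (- a1 / real (k-1)) * real (card ({1..N}-Y)) * real (card {1..N}) * sum F Y"
    proof (rule block)
      fix mu pa ka assume h: "mu \<in> {1..N}-Y" "pa \<in> {1..N}" "ka \<in> Y"
      have mu: "mu \<in> {1..N}" using h Y by auto
      have st: "step Y (mu,pa,ka) = Y - {ka}" using h by (simp add: step_BY)
      have kaI: "ka \<in> {1..N}" "ka \<notin> Y - {ka}" using h Y by auto
      have c: "card (step Y (mu,pa,ka)) = k - 1" using st h fY k by simp
      have sc1: "sum F (Y - {ka}) = ?SY - F ka" using h fY by (simp add: sum_diff1)
      have A: "Anew N Y F (mu,pa,ka) = (?SY - F ka) / real (k-1)"
        unfolding Anew_def c using h Y fY mu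
        apply (subst st, subst newsum)
        apply auto[3]
        apply (simp only: sc1)
        apply simp
        done
      have sc: "sum F ({1..N} - (Y - {ka})) = ?SB + F ka" using h Y by (intro sum_compl_del) auto
      have B: "Bnew N Y F (mu,pa,ka) = (?SB + (F mu + F pa)/2) / real (N - (k-1))"
        unfolding Bnew_def c using h Y fY mu
        apply (subst st, subst newsum)
        apply auto[3]
        apply (simp only: sc)
        using kaI apply simp
        done
      show "?g (mu,pa,ka) = (a1 * ?SY / real (k-1) + a2 * ?SB / real (N - (k-1)) + a3)
         + a2 / (2 * real (N - (k-1))) * F mu + a2 / (2 * real (N - (k-1))) * F pa + (- a1 / real (k-1)) * F ka"
        by (simp only: c A B if_True) (simp add: add_divide_distrib diff_divide_distrib algebra_simps)
    qed (use fY in auto)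
    then show ?thesis using cB k sum_I_split[OF Y, of F] by simp
  qed
  have E: "measure_pmf.expectation (draw_pmf N s Y) ?g = (0 + (1+s) * 0 + (real (N - k) * real N * real k * (a1 * ?SY / real (k-1) + a2 * ?SB / real (N - (k-1)) + a3)
     + a2 / (2 * real (N - (k-1))) * real N * real k * ?SB
     + a2 / (2 * real (N - (k-1))) * real (N - k) * real k * (?SY + ?SB)
     + (- a1 / real (k-1)) * real (N - k) * real N * ?SY) + (1+s) * 0) / (real N * real N * (real k + (1+s) * real (N - k)))"
    apply (subst E_draw[OF N1 s])
    apply (subst decomp[OF Y])
    apply (simp only: b1 b2 b3 b4 Z_eq[OF Y] k(1))
    done
  show ?thesis
  proof -
    define K where "K = real k"
    define M where "M = real (N - k)"
    have eN: "real N = K + M" "real (N - (k-1)) = M + 1" "real (N - k + 1) = M + 1" using k unfolding K_def M_def by auto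
    have pK: "K > 0" "M > 0" using k unfolding K_def M_def by auto
    show ?thesis
    proof (cases "1 < k")
      case True
      have e1: "real (k - 1) = K - 1" using True unfolding K_def by auto
      have "K > 1" using True unfolding K_def by auto
      then show ?thesis unfolding E e1 eN K_def[symmetric] M_def[symmetric] if_P[OF True]
        by (intro alg_down1) (use pK s in auto)
    next
      case False
      have e1: "real (k - 1) = 0" using False by auto
      have "K = 1" using False k unfolding K_def by auto
      then show ?thesis unfolding E e1 eN K_def[symmetric] M_def[symmetric] if_not_P[OF False]
        by (intro alg_down2) (use pK s in auto)
    qed
  qed
qed


lemma alg_stay:
  fixes K M s SY SB a1 a2 a3 :: real
  assumes "K > 0" "M > 0" "s > 0"
  shows "((K * (K+M) * K * (a1 * SY / K + a2 * SB / M + a3)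
     + a1 / (2 * K) * (K+M) * K * SY
     + a1 / (2 * K) * K * K * (SY + SB)
     + (- a1 / K) * K * (K+M) * SY) + (1+s) * 0 + 0 +
     (1+s) * (M * (K+M) * M * (a1 * SY / K + a2 * SB / M + a3)
     + a2 / (2 * M) * (K+M) * M * SB
     + a2 / (2 * M) * M * M * (SY + SB)
     + (- a2 / M) * M * (K+M) * SB)) / ((K+M) * (K+M) * (K + (1+s) * M))
 = (K ^ 2 + (1+s) * M ^ 2) / ((K+M) * (K + (1+s) * M)) *
      (a1 * (K ^ 2 / (K ^ 2 + (1 + s) * M ^ 2) * ((1 - M / (2 * K * (K+M))) * (SY / K) + M / (2 * K * (K+M)) * (SB / M))
             + (1 + s) * M ^ 2 / (K ^ 2 + (1 + s) * M ^ 2) * (SY / K))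
       + a2 * (K ^ 2 / (K ^ 2 + (1 + s) * M ^ 2) * (SB / M)
             + (1 + s) * M ^ 2 / (K ^ 2 + (1 + s) * M ^ 2) * (K / (2 * (K+M) * M) * (SY / K) + (1 - K / (2 * (K+M) * M)) * (SB / M)))
       + a3)"
proof -
  have p: "(1+s)*M > 0" "(1+s)*M^2 > 0" using assms by auto
  have "K + (1+s)*M > 0" "K^2 + (1+s)*M^2 > 0" using p assms by (auto simp: add_pos_pos)
  moreover have "K + M \<noteq> 0" "K \<noteq> 0" "M \<noteq> 0" using assms by auto
  ultimately show ?thesis by (simp add: divide_simps) (simp add: algebra_simps power2_eq_square)
qed

lemma stay_draw:
  assumes N1: "N \<ge> 1" and s: "s > 0" and Y: "Y \<subseteq> {1..N}" and k: "card Y = k" "1 \<le> k" "k < N"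
  shows "measure_pmf.expectation (draw_pmf N s Y)
      (\<lambda>d. if card (step Y d) = k then a1 * Anew N Y F d + a2 * Bnew N Y F d + a3 else 0)
    = (real k ^ 2 + (1+s) * real (N - k) ^ 2) / (real N * (real k + (1+s) * real (N-k))) *
      (a1 * (real k ^ 2 / (real k ^ 2 + (1 + s) * real (N - k) ^ 2) *
               ((1 - real (N - k) / (2 * real k * real N)) * (sum F Y / real k) + real (N - k) / (2 * real k * real N) * (sum F ({1..N} - Y) / real (N - k)))
             + (1 + s) * real (N - k) ^ 2 / (real k ^ 2 + (1 + s) * real (N - k) ^ 2) * (sum F Y / real k))
       + a2 * (real k ^ 2 / (real k ^ 2 + (1 + s) * real (N - k) ^ 2) * (sum F ({1..N} - Y) / real (N - k))
             + (1 + s) * real (N - k) ^ 2 / (real k ^ 2 + (1 + s) * real (N - k) ^ 2) *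
               (real k / (2 * real N * real (N - k)) * (sum F Y / real k) + (1 - real k / (2 * real N * real (N - k))) * (sum F ({1..N} - Y) / real (N - k))))
       + a3)"
proof -
  have fY: "finite Y" using Y finite_subset by blast
  let ?g = "\<lambda>d. if card (step Y d) = k then a1 * Anew N Y F d + a2 * Bnew N Y F d + a3 else 0"
  let ?SY = "sum F Y" and ?SB = "sum F ({1..N} - Y)"
  have cB: "card ({1..N} - Y) = N - k" using Y fY k by (simp add: card_Diff_subset)
  have b2: "(\<Sum>mu\<in>{1..N}-Y. \<Sum>pa\<in>{1..N}. \<Sum>ka\<in>Y. ?g (mu,pa,ka)) = 0"
    using k fY by (intro sum.neutral ballI) (auto simp: step_BY)
  have b4: "(\<Sum>mu\<in>Y. \<Sum>pa\<in>{1..N}. \<Sum>ka\<in>{1..N}-Y. ?g (mu,pa,ka)) = 0"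
    using k fY by (intro sum.neutral ballI) (auto simp: step_YB)
  have b1: "(\<Sum>mu\<in>Y. \<Sum>pa\<in>{1..N}. \<Sum>ka\<in>Y. ?g (mu,pa,ka)) =
     real k * real N * real k * (a1 * ?SY / real k + a2 * ?SB / real (N - k) + a3)
     + a1 / (2 * real k) * real N * real k * ?SY
     + a1 / (2 * real k) * real k * real k * (?SY + ?SB)
     + (- a1 / real k) * real k * real N * ?SY"
  proof -
    have "(\<Sum>mu\<in>Y. \<Sum>pa\<in>{1..N}. \<Sum>ka\<in>Y. ?g (mu,pa,ka)) =
      real (card Y) * real (card {1..N}) * real (card Y) * (a1 * ?SY / real k + a2 * ?SB / real (N - k) + a3)
      + a1 / (2 * real k) * real (card {1..N}) * real (card Y) * sum F Y
      + a1 / (2 * real k) * real (card Y) * real (card Y) * sum F {1..N}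
      + (- a1 / real k) * real (card Y) * real (card {1..N}) * sum F Y"
    proof (rule block)
      fix mu pa ka assume h: "mu \<in> Y" "pa \<in> {1..N}" "ka \<in> Y"
      have mu: "mu \<in> {1..N}" using h Y by auto
      have st: "step Y (mu,pa,ka) = Y" using h by (simp add: step_YY)
      have kaI: "ka \<in> {1..N}" "ka \<notin> {1..N} - Y" using h Y by auto
      have c: "card (step Y (mu,pa,ka)) = k" using st k by simp
      have A: "Anew N Y F (mu,pa,ka) = (?SY + ((F mu + F pa)/2 - F ka)) / real k"
        unfolding Anew_def c using h Y fY mu
        apply (subst st, subst newsum)
        apply auto[3]
        using kaI apply simp
        done
      have B: "Bnew N Y F (mu,pa,ka) = ?SB / real (N - k)"
        unfolding Bnew_def c using h Y fY mu
        apply (subst st, subst newsum)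
        apply auto[3]
        using kaI apply simp
        done
      show "?g (mu,pa,ka) = (a1 * ?SY / real k + a2 * ?SB / real (N - k) + a3)
         + a1 / (2 * real k) * F mu + a1 / (2 * real k) * F pa + (- a1 / real k) * F ka"
        by (simp only: c A B if_True) (simp add: add_divide_distrib diff_divide_distrib algebra_simps)
    qed (use fY in auto)
    then show ?thesis using cB k sum_I_split[OF Y, of F] by simp
  qed
  have b3: "(\<Sum>mu\<in>{1..N}-Y. \<Sum>pa\<in>{1..N}. \<Sum>ka\<in>{1..N}-Y. ?g (mu,pa,ka)) =
     real (N - k) * real N * real (N - k) * (a1 * ?SY / real k + a2 * ?SB / real (N - k) + a3)
     + a2 / (2 * real (N - k)) * real N * real (N - k) * ?SB
     + a2 / (2 * real (N - k)) * real (N - k) * real (N - k) * (?SY + ?SB)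
     + (- a2 / real (N - k)) * real (N - k) * real N * ?SB"
  proof -
    have "(\<Sum>mu\<in>{1..N}-Y. \<Sum>pa\<in>{1..N}. \<Sum>ka\<in>{1..N}-Y. ?g (mu,pa,ka)) =
      real (card ({1..N}-Y)) * real (card {1..N}) * real (card ({1..N}-Y)) * (a1 * ?SY / real k + a2 * ?SB / real (N - k) + a3)
      + a2 / (2 * real (N - k)) * real (card {1..N}) * real (card ({1..N}-Y)) * sum F ({1..N}-Y)
      + a2 / (2 * real (N - k)) * real (card ({1..N}-Y)) * real (card ({1..N}-Y)) * sum F {1..N}
      + (- a2 / real (N - k)) * real (card ({1..N}-Y)) * real (card {1..N}) * sum F ({1..N}-Y)"
    proof (rule block)
      fix mu pa ka assume h: "mu \<in> {1..N}-Y" "pa \<in> {1..N}" "ka \<in> {1..N}-Y"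
      have mu: "mu \<in> {1..N}" using h Y by auto
      have st: "step Y (mu,pa,ka) = Y" using h by (simp add: step_BB)
      have kaI: "ka \<in> {1..N}" "ka \<notin> Y" "ka \<in> {1..N} - Y" using h Y by auto
      have c: "card (step Y (mu,pa,ka)) = k" using st k by simp
      have A: "Anew N Y F (mu,pa,ka) = ?SY / real k"
        unfolding Anew_def c using h Y fY mu
        apply (subst st, subst newsum)
        apply auto[3]
        using kaI apply simp
        done
      have B: "Bnew N Y F (mu,pa,ka) = (?SB + ((F mu + F pa)/2 - F ka)) / real (N - k)"
        unfolding Bnew_def c using h Y fY mu
        apply (subst st, subst newsum)
        apply auto[3]
        using kaI apply simp
        done
      show "?g (mu,pa,ka) = (a1 * ?SY / real k + a2 * ?SB / real (N - k) + a3)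
         + a2 / (2 * real (N - k)) * F mu + a2 / (2 * real (N - k)) * F pa + (- a2 / real (N - k)) * F ka"
        by (simp only: c A B if_True) (simp add: add_divide_distrib diff_divide_distrib algebra_simps)
    qed (use fY in auto)
    then show ?thesis using cB k sum_I_split[OF Y, of F] by simp
  qed
  have E: "measure_pmf.expectation (draw_pmf N s Y) ?g = ((real k * real N * real k * (a1 * ?SY / real k + a2 * ?SB / real (N - k) + a3)
     + a1 / (2 * real k) * real N * real k * ?SY
     + a1 / (2 * real k) * real k * real k * (?SY + ?SB)
     + (- a1 / real k) * real k * real N * ?SY) + (1+s) * 0 + 0 + (1+s) * (real (N - k) * real N * real (N - k) * (a1 * ?SY / real k + a2 * ?SB / real (N - k) + a3)
     + a2 / (2 * real (N - k)) * real N * real (N - k) * ?SB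
     + a2 / (2 * real (N - k)) * real (N - k) * real (N - k) * (?SY + ?SB)
     + (- a2 / real (N - k)) * real (N - k) * real N * ?SB)) / (real N * real N * (real k + (1+s) * real (N - k)))"
    apply (subst E_draw[OF N1 s])
    apply (subst decomp[OF Y])
    apply (simp only: b1 b2 b3 b4 Z_eq[OF Y] k(1))
    done
  show ?thesis
  proof -
    define K where "K = real k"
    define M where "M = real (N - k)"
    have eN: "real N = K + M" using k unfolding K_def M_def by auto
    have pK: "K > 0" "M > 0" using k unfolding K_def M_def by auto
    show ?thesis unfolding E eN K_def[symmetric] M_def[symmetric]
      by (intro alg_stay) (use pK s in auto)
  qed
qed


lemma Yset_snoc: "Yset Y0 (ds @ [d]) = step (Yset Y0 ds) d"
  by (simp add: Yset_def)

lemma Yset_Cons: "Yset Y0 (d # ds) = Yset (step Y0 d) ds"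
  by (simp add: Yset_def)

lemma paths_snoc:
  "paths N s (Suc n) Y = bind_pmf (paths N s n Y) (\<lambda>ds. map_pmf (\<lambda>d. ds @ [d]) (draw_pmf N s (Yset Y ds)))"
proof (induction n arbitrary: Y)
  case 0
  then show ?case by (simp add: Yset_def map_pmf_def bind_return_pmf bind_assoc_pmf bind_return_pmf')
next
  case (Suc n)
  show ?case
    apply (subst paths.simps(2))
    apply (subst Suc)
    apply (subst paths.simps(2))
    apply (simp add: map_pmf_def bind_assoc_pmf bind_return_pmf Yset_Cons)
    done
qed

lemma fin_paths: assumes "N \<ge> 1" "s > 0" shows "finite (set_pmf (paths N s n Y))"
proof (induction n arbitrary: Y)
  case 0 then show ?case by simp
next
  case (Suc n)
  show ?case using fin_draw[OF assms] Suc by (simp add: set_bind_pmf)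
qed

lemma supp_paths:
  assumes "N \<ge> 1" "s > 0" "ds \<in> set_pmf (paths N s n Y)"
  shows "length ds = n \<and> (Y \<subseteq> {1..N} \<longrightarrow> Yset Y ds \<subseteq> {1..N})"
  using assms(3)
proof (induction n arbitrary: ds)
  case 0 then show ?case by (simp add: Yset_def)
next
  case (Suc n)
  from Suc.prems obtain ds0 d where h: "ds0 \<in> set_pmf (paths N s n Y)" "d \<in> set_pmf (draw_pmf N s (Yset Y ds0))" "ds = ds0 @ [d]"
    unfolding paths_snoc by (auto simp del: paths.simps simp: set_bind_pmf)
  have "d \<in> {1..N} \<times> {1..N} \<times> {1..N}" using set_draw[OF assms(1,2)] h(2) by blast
  then show ?case using Suc.IH[OF h(1)] h(3)
    by (auto simp: Yset_snoc step_def split: prod.splits)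
qed

lemma exp_sum: "finite (set_pmf p) \<Longrightarrow> measure_pmf.expectation p (f :: 'a \<Rightarrow> real) = (\<Sum>x\<in>set_pmf p. pmf p x * f x)"
  by (subst integral_measure_pmf[of "set_pmf p"]) auto

lemma exp_bind:
  assumes "finite (set_pmf p)" "\<And>x. x \<in> set_pmf p \<Longrightarrow> finite (set_pmf (f x))"
  shows "measure_pmf.expectation (bind_pmf p f) (h :: 'b \<Rightarrow> real) = (\<Sum>x\<in>set_pmf p. pmf p x * measure_pmf.expectation (f x) h)"
  using assms by (subst pmf_expectation_bind[of "set_pmf p"]) auto

lemma cond_exp:
  assumes "finite (set_pmf P)" "set_pmf P \<inter> A \<noteq> {}"
  shows "measure_pmf.expectation (cond_pmf P A) (f :: 'a \<Rightarrow> real) =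
    measure_pmf.expectation P (\<lambda>x. if x \<in> A then f x else 0) / measure_pmf.expectation P (\<lambda>x. if x \<in> A then 1 else 0)"
proof -
  have fc: "finite (set_pmf (cond_pmf P A))" using assms by simp
  have m: "measure_pmf.prob P A = (\<Sum>x\<in>set_pmf P. pmf P x * (if x \<in> A then 1 else 0))"
  proof -
    have "measure_pmf.prob P A = measure_pmf.prob P (set_pmf P \<inter> A)"
      using measure_Int_set_pmf[of P A] by (simp add: Int_commute)
    also have "\<dots> = sum (pmf P) (set_pmf P \<inter> A)" using assms by (simp add: measure_measure_pmf_finite)
    also have "\<dots> = (\<Sum>x\<in>set_pmf P. pmf P x * (if x \<in> A then 1 else 0))"
      using assms(1) by (simp add: sum.inter_restrict if_distrib cong: if_cong)
    finally show ?thesis .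
  qed
  have "measure_pmf.expectation (cond_pmf P A) f = (\<Sum>x\<in>set_pmf P. pmf (cond_pmf P A) x * f x)"
    using assms by (subst integral_measure_pmf[of "set_pmf P"]) auto
  also have "\<dots> = (\<Sum>x\<in>set_pmf P. pmf P x * (if x \<in> A then f x else 0)) / measure_pmf.prob P A"
    using assms by (simp add: pmf_cond sum_divide_distrib) (intro sum.cong, auto)
  finally show ?thesis using assms(1) m by (simp add: exp_sum)
qed


lemma ypath_snoc: "ypath Y0 (ds @ [d]) = ypath Y0 ds @ [card (step (Yset Y0 ds) d)]"
proof -
  have "map (\<lambda>m. card (Yset Y0 (take m (ds @ [d])))) [0..<Suc (length ds)]
      = map (\<lambda>m. card (Yset Y0 (take m ds))) [0..<Suc (length ds)]"
    by (intro map_cong refl) (auto simp: take_append)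
  then show ?thesis by (simp add: ypath_def Yset_snoc[symmetric])
qed

lemma length_ypath: "length (ypath Y0 ds) = Suc (length ds)"
  by (simp add: ypath_def)

lemma ypath_last: "ypath Y0 ds ! length ds = card (Yset Y0 ds)"
  by (simp add: ypath_def nth_append del: upt_Suc)

lemma list_snoc_eq:
  assumes "length xs = Suc n" "length ys = Suc (Suc n)"
  shows "(xs @ [c] = ys) \<longleftrightarrow> (xs = take (Suc n) ys \<and> c = ys ! Suc n)"
proof -
  have "ys = take (Suc n) ys @ [ys ! Suc n]" using assms(2)
    by (metis Suc_lessI lessI take_Suc_conv_app_nth take_all_iff order.refl)
  then show ?thesis using assms by (metis append1_eq_conv)
qed

definition Fof :: "nat \<Rightarrow> nat set \<Rightarrow> draw list \<Rightarrow> nat \<Rightarrow> real" where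
  "Fof N Y0 ds x = (\<Sum>l'\<in>Y0. Agen N ds x l')"

lemma Fsnoc: "(\<Sum>l'\<in>Y0. Agen N (ds @ [d]) l l') = (\<Sum>x\<in>{1..N}. gkernel d l x * Fof N Y0 ds x)"
  unfolding Agen_def Fof_def by (simp add: sum_distrib_left sum.swap[of _ Y0])

lemma XiA_snoc: "XiA N Y0 (ds @ [d]) = Anew N (Yset Y0 ds) (Fof N Y0 ds) d"
  unfolding XiA_def Anew_def Yset_snoc Fsnoc ..

lemma XiB_snoc: "XiB N Y0 (ds @ [d]) = Bnew N (Yset Y0 ds) (Fof N Y0 ds) d"
  unfolding XiB_def Bnew_def Yset_snoc Fsnoc ..

lemma XiA_eq: "XiA N Y0 ds = sum (Fof N Y0 ds) (Yset Y0 ds) / real (card (Yset Y0 ds))"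
  unfolding XiA_def Fof_def ..

lemma XiB_eq: "XiB N Y0 ds = sum (Fof N Y0 ds) ({1..N} - Yset Y0 ds) / real (N - card (Yset Y0 ds))"
  unfolding XiB_def Fof_def ..

lemma num_step:
  assumes N1: "N \<ge> 1" and s: "s > 0" and ly: "length ys = Suc (Suc n)"
  shows "measure_pmf.expectation (paths N s (Suc n) Y0) (\<lambda>ds. if ds \<in> {ds. ypath Y0 ds = ys} then h ds else 0)
    = (\<Sum>ds0\<in>set_pmf (paths N s n Y0). pmf (paths N s n Y0) ds0 *
        (if ypath Y0 ds0 = take (Suc n) ys then
           measure_pmf.expectation (draw_pmf N s (Yset Y0 ds0))
             (\<lambda>d. if card (step (Yset Y0 ds0) d) = ys ! Suc n then h (ds0 @ [d]) else 0)
         else 0))"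
proof -
  have eq: "measure_pmf.expectation (paths N s (Suc n) Y0) (\<lambda>ds. if ds \<in> {ds. ypath Y0 ds = ys} then h ds else 0)
     = (\<Sum>ds0\<in>set_pmf (paths N s n Y0). pmf (paths N s n Y0) ds0 *
        measure_pmf.expectation (draw_pmf N s (Yset Y0 ds0))
             (\<lambda>d. if ypath Y0 (ds0 @ [d]) = ys then h (ds0 @ [d]) else 0))"
    unfolding paths_snoc
    by (subst exp_bind) (auto simp: fin_paths[OF N1 s] fin_draw[OF N1 s])
  show ?thesis
    unfolding eq
  proof (intro sum.cong refl arg_cong2[where f = "(*)"])
    fix ds0 assume h: "ds0 \<in> set_pmf (paths N s n Y0)"
    have l: "length (ypath Y0 ds0) = Suc n" using supp_paths[OF N1 s h] by (simp add: length_ypath)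
    show "measure_pmf.expectation (draw_pmf N s (Yset Y0 ds0))
             (\<lambda>d. if ypath Y0 (ds0 @ [d]) = ys then h (ds0 @ [d]) else 0) =
        (if ypath Y0 ds0 = take (Suc n) ys then
           measure_pmf.expectation (draw_pmf N s (Yset Y0 ds0))
             (\<lambda>d. if card (step (Yset Y0 ds0) d) = ys ! Suc n then h (ds0 @ [d]) else 0)
         else 0)"
      unfolding ypath_snoc list_snoc_eq[OF l ly] by auto
  qed
qed


lemma possible_prev:
  assumes N1: "N \<ge> 1" and s: "s > 0" and ly: "length ys = Suc (Suc n)"
    and poss: "possible N s Y0 (Suc n) ys"
  shows "\<exists>ds0 d. ds0 \<in> set_pmf (paths N s n Y0) \<and> d \<in> set_pmf (draw_pmf N s (Yset Y0 ds0))
      \<and> ypath Y0 ds0 = take (Suc n) ys \<and> card (step (Yset Y0 ds0) d) = ys ! Suc n"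
proof -
  obtain ds where ds: "ds \<in> set_pmf (paths N s (Suc n) Y0)" "ypath Y0 ds = ys"
    using poss unfolding possible_def by auto
  from ds(1) obtain ds0 d where h: "ds0 \<in> set_pmf (paths N s n Y0)" "d \<in> set_pmf (draw_pmf N s (Yset Y0 ds0))" "ds = ds0 @ [d]"
    unfolding paths_snoc by (auto simp del: paths.simps simp: set_bind_pmf)
  have l: "length (ypath Y0 ds0) = Suc n" using supp_paths[OF N1 s h(1)] by (simp add: length_ypath)
  have "ypath Y0 ds0 @ [card (step (Yset Y0 ds0) d)] = ys" using ds(2) h(3) by (simp add: ypath_snoc)
  then show ?thesis using h list_snoc_eq[OF l ly] by blast
qed

lemma assemble:
  assumes N1: "N \<ge> 1" and s: "s > 0" and ly: "length ys = Suc (Suc n)"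
    and poss: "possible N s Y0 (Suc n) ys" and P0: "P0 \<noteq> 0"
    and inner: "\<And>ds0 a1 a2 a3. ds0 \<in> set_pmf (paths N s n Y0) \<Longrightarrow> ypath Y0 ds0 = take (Suc n) ys \<Longrightarrow>
      measure_pmf.expectation (draw_pmf N s (Yset Y0 ds0))
        (\<lambda>d. if card (step (Yset Y0 ds0) d) = ys ! Suc n then a1 * XiA N Y0 (ds0 @ [d]) + a2 * XiB N Y0 (ds0 @ [d]) + a3 else 0)
      = P0 * (a1 * (cAA * XiA N Y0 ds0 + cAB * XiB N Y0 ds0) + a2 * (cBA * XiA N Y0 ds0 + cBB * XiB N Y0 ds0) + a3)"
  shows "Ucond N s Y0 (Suc n) ys = cAA * Ucond N s Y0 n (take (Suc n) ys) + cAB * Vcond N s Y0 n (take (Suc n) ys)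
       \<and> Vcond N s Y0 (Suc n) ys = cBA * Ucond N s Y0 n (take (Suc n) ys) + cBB * Vcond N s Y0 n (take (Suc n) ys)"
proof -
  let ?P = "paths N s n Y0" and ?P' = "paths N s (Suc n) Y0"
  let ?ys0 = "take (Suc n) ys"
  let ?S = "set_pmf ?P"
  have ne1: "set_pmf ?P' \<inter> {ds. ypath Y0 ds = ys} \<noteq> {}" using poss unfolding possible_def .
  obtain ds0 d where "ds0 \<in> ?S" "ypath Y0 ds0 = ?ys0"
    using possible_prev[OF N1 s ly poss] by blast
  then have ne0: "?S \<inter> {ds. ypath Y0 ds = ?ys0} \<noteq> {}" by blast
  define NA where "NA = (\<Sum>x\<in>?S. pmf ?P x * (if ypath Y0 x = ?ys0 then XiA N Y0 x else 0))"
  define NB where "NB = (\<Sum>x\<in>?S. pmf ?P x * (if ypath Y0 x = ?ys0 then XiB N Y0 x else 0))"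
  define D where "D = (\<Sum>x\<in>?S. pmf ?P x * (if ypath Y0 x = ?ys0 then 1 else 0))"
  have U: "Ucond N s Y0 n ?ys0 = NA / D" and V: "Vcond N s Y0 n ?ys0 = NB / D"
    unfolding Ucond_def Vcond_def NA_def NB_def D_def
    by (simp_all only: cond_exp[OF fin_paths[OF N1 s] ne0] exp_sum[OF fin_paths[OF N1 s]] mem_Collect_eq)
  have i1: "measure_pmf.expectation (draw_pmf N s (Yset Y0 x))
        (\<lambda>d. if card (step (Yset Y0 x) d) = ys ! Suc n then XiA N Y0 (x @ [d]) else 0)
      = P0 * (cAA * XiA N Y0 x + cAB * XiB N Y0 x)"
    if "x \<in> ?S" "ypath Y0 x = ?ys0" for x using inner[OF that, of 1 0 0] by (simp only: mult_1_left mult_1_right mult_zero_left add_0_right add_0_left)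
  have i2: "measure_pmf.expectation (draw_pmf N s (Yset Y0 x))
        (\<lambda>d. if card (step (Yset Y0 x) d) = ys ! Suc n then XiB N Y0 (x @ [d]) else 0)
      = P0 * (cBA * XiA N Y0 x + cBB * XiB N Y0 x)"
    if "x \<in> ?S" "ypath Y0 x = ?ys0" for x using inner[OF that, of 0 1 0] by (simp only: mult_1_left mult_1_right mult_zero_left add_0_right add_0_left)
  have i3: "measure_pmf.expectation (draw_pmf N s (Yset Y0 x))
        (\<lambda>d. if card (step (Yset Y0 x) d) = ys ! Suc n then 1 else 0)
      = P0"
    if "x \<in> ?S" "ypath Y0 x = ?ys0" for x using inner[OF that, of 0 0 1] by (simp only: mult_1_left mult_1_right mult_zero_left add_0_right add_0_left)
  have NA': "measure_pmf.expectation ?P' (\<lambda>ds. if ds \<in> {ds. ypath Y0 ds = ys} then XiA N Y0 ds else 0)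
     = P0 * (cAA * NA + cAB * NB)"
  proof -
    have "measure_pmf.expectation ?P' (\<lambda>ds. if ds \<in> {ds. ypath Y0 ds = ys} then XiA N Y0 ds else 0)
      = (\<Sum>x\<in>?S. pmf ?P x * (if ypath Y0 x = ?ys0 then P0 * (cAA * XiA N Y0 x + cAB * XiB N Y0 x) else 0))"
      unfolding num_step[OF N1 s ly] by (intro sum.cong refl) (simp add: i1)
    also have "\<dots> = (\<Sum>x\<in>?S. P0 * cAA * (pmf ?P x * (if ypath Y0 x = ?ys0 then XiA N Y0 x else 0))
        + P0 * cAB * (pmf ?P x * (if ypath Y0 x = ?ys0 then XiB N Y0 x else 0)))"
      by (intro sum.cong refl) (simp add: algebra_simps)
    also have "\<dots> = P0 * (cAA * NA + cAB * NB)" unfolding NA_def NB_def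
      by (simp add: sum.distrib sum_distrib_left[symmetric] algebra_simps)
    finally show ?thesis .
  qed
  have NB': "measure_pmf.expectation ?P' (\<lambda>ds. if ds \<in> {ds. ypath Y0 ds = ys} then XiB N Y0 ds else 0)
     = P0 * (cBA * NA + cBB * NB)"
  proof -
    have "measure_pmf.expectation ?P' (\<lambda>ds. if ds \<in> {ds. ypath Y0 ds = ys} then XiB N Y0 ds else 0)
      = (\<Sum>x\<in>?S. pmf ?P x * (if ypath Y0 x = ?ys0 then P0 * (cBA * XiA N Y0 x + cBB * XiB N Y0 x) else 0))"
      unfolding num_step[OF N1 s ly] by (intro sum.cong refl) (simp add: i2)
    also have "\<dots> = (\<Sum>x\<in>?S. P0 * cBA * (pmf ?P x * (if ypath Y0 x = ?ys0 then XiA N Y0 x else 0))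
        + P0 * cBB * (pmf ?P x * (if ypath Y0 x = ?ys0 then XiB N Y0 x else 0)))"
      by (intro sum.cong refl) (simp add: algebra_simps)
    also have "\<dots> = P0 * (cBA * NA + cBB * NB)" unfolding NA_def NB_def
      by (simp add: sum.distrib sum_distrib_left[symmetric] algebra_simps)
    finally show ?thesis .
  qed
  have D': "measure_pmf.expectation ?P' (\<lambda>ds. if ds \<in> {ds. ypath Y0 ds = ys} then 1 else 0) = P0 * D"
  proof -
    have "measure_pmf.expectation ?P' (\<lambda>ds. if ds \<in> {ds. ypath Y0 ds = ys} then 1 else 0)
      = (\<Sum>x\<in>?S. pmf ?P x * (if ypath Y0 x = ?ys0 then P0 else 0))"
      unfolding num_step[OF N1 s ly] by (intro sum.cong refl) (simp add: i3)
    also have "\<dots> = P0 * D" unfolding D_def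
      by (simp add: sum_distrib_left algebra_simps if_distrib cong: if_cong)
    finally show ?thesis .
  qed
  have U': "Ucond N s Y0 (Suc n) ys = P0 * (cAA * NA + cAB * NB) / (P0 * D)"
    unfolding Ucond_def by (simp only: cond_exp[OF fin_paths[OF N1 s] ne1] NA' D')
  have V': "Vcond N s Y0 (Suc n) ys = P0 * (cBA * NA + cBB * NB) / (P0 * D)"
    unfolding Vcond_def by (simp only: cond_exp[OF fin_paths[OF N1 s] ne1] NB' D')
  show ?thesis unfolding U V U' V' using P0 by (simp add: add_divide_distrib)
qed


lemma poss_len:
  assumes N1: "N \<ge> 1" and s: "s > 0" and poss: "possible N s Y0 (Suc n) ys"
  shows "length ys = Suc (Suc n)"
proof -
  obtain ds where ds: "ds \<in> set_pmf (paths N s (Suc n) Y0)" "ypath Y0 ds = ys"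
    using poss unfolding possible_def by auto
  then show ?thesis using supp_paths[OF N1 s ds(1)] by (auto simp: length_ypath)
qed

lemma ev_facts:
  assumes N1: "N \<ge> 1" and s: "s > 0" and Y0: "Y0 \<subseteq> {1..N}" and ly: "length ys = Suc (Suc n)"
    and h: "ds0 \<in> set_pmf (paths N s n Y0)" "ypath Y0 ds0 = take (Suc n) ys"
  shows "Yset Y0 ds0 \<subseteq> {1..N} \<and> card (Yset Y0 ds0) = ys ! n"
proof -
  have l: "length ds0 = n" "Yset Y0 ds0 \<subseteq> {1..N}" using supp_paths[OF N1 s h(1)] Y0 by auto
  have "card (Yset Y0 ds0) = ypath Y0 ds0 ! n" using ypath_last[of Y0 ds0] l by simp
  also have "\<dots> = ys ! n" using h(2) ly by simp
  finally show ?thesis using l by simp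
qed

lemma up_case:
  assumes N1: "N \<ge> 1" and s: "s > 0" and Y0: "Y0 \<subseteq> {1..N}"
    and poss: "possible N s Y0 (Suc n) ys" and k: "ys ! n = k" "1 \<le> k" "k < N" and nx: "ys ! Suc n = k + 1"
  shows "Ucond N s Y0 (Suc n) ys = (1 - real (N - k) / (2 * real N * real (k + 1))) * Ucond N s Y0 n (take (Suc n) ys)
          + real (N - k) / (2 * real N * real (k + 1)) * Vcond N s Y0 n (take (Suc n) ys)
      \<and> Vcond N s Y0 (Suc n) ys = 0 * Ucond N s Y0 n (take (Suc n) ys) + (if k + 1 < N then 1 else 0) * Vcond N s Y0 n (take (Suc n) ys)"
proof (rule assemble[OF N1 s poss_len[OF N1 s poss] poss])
  have a: "(1+s) * real (N - k) > 0" using s k by simp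
  have "real k + (1+s) * real (N-k) > 0" using a by linarith
  moreover have "(1+s) * real k * real (N - k) > 0" "real N > 0" using s k by auto
  ultimately have "(1+s) * real k * real (N - k) / (real N * (real k + (1+s) * real (N-k))) > 0"
    using k s by (intro divide_pos_pos mult_pos_pos) auto
  then show "(1+s) * real k * real (N - k) / (real N * (real k + (1+s) * real (N-k))) \<noteq> 0" by linarith
next
  fix ds0 a1 a2 a3 assume h: "ds0 \<in> set_pmf (paths N s n Y0)" "ypath Y0 ds0 = take (Suc n) ys"
  note ev = ev_facts[OF N1 s Y0 poss_len[OF N1 s poss] h]
  have ck: "card (Yset Y0 ds0) = k" using ev k by simp
  have kN: "k > 0" "N - k > 0" using k by auto
  show "measure_pmf.expectation (draw_pmf N s (Yset Y0 ds0))
        (\<lambda>d. if card (step (Yset Y0 ds0) d) = ys ! Suc n then a1 * XiA N Y0 (ds0 @ [d]) + a2 * XiB N Y0 (ds0 @ [d]) + a3 else 0)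
      = (1+s) * real k * real (N - k) / (real N * (real k + (1+s) * real (N-k))) *
        (a1 * ((1 - real (N - k) / (2 * real N * real (k + 1))) * XiA N Y0 ds0 + real (N - k) / (2 * real N * real (k + 1)) * XiB N Y0 ds0)
         + a2 * (0 * XiA N Y0 ds0 + (if k + 1 < N then 1 else 0) * XiB N Y0 ds0) + a3)"
    unfolding nx XiA_snoc XiB_snoc
    by (subst up_draw[OF N1 s conjunct1[OF ev] ck k(2,3)]) (simp add: XiA_eq XiB_eq ck)
qed

lemma down_case:
  assumes N1: "N \<ge> 1" and s: "s > 0" and Y0: "Y0 \<subseteq> {1..N}"
    and poss: "possible N s Y0 (Suc n) ys" and k: "ys ! n = k" "1 \<le> k" "k < N" and nx: "ys ! Suc n = k - 1"
  shows "Ucond N s Y0 (Suc n) ys = (if 1 < k then 1 else 0) * Ucond N s Y0 n (take (Suc n) ys)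
          + 0 * Vcond N s Y0 n (take (Suc n) ys)
      \<and> Vcond N s Y0 (Suc n) ys = real k / (2 * real N * real (N - k + 1)) * Ucond N s Y0 n (take (Suc n) ys)
          + (1 - real k / (2 * real N * real (N - k + 1))) * Vcond N s Y0 n (take (Suc n) ys)"
proof (rule assemble[OF N1 s poss_len[OF N1 s poss] poss])
  have a: "(1+s) * real (N - k) > 0" using s k by simp
  have "real k + (1+s) * real (N-k) > 0" using a by linarith
  moreover have "real k * real (N - k) > 0" "real N > 0" using s k by auto
  ultimately have "real k * real (N - k) / (real N * (real k + (1+s) * real (N-k))) > 0"
    using k s by (intro divide_pos_pos mult_pos_pos) auto
  then show "real k * real (N - k) / (real N * (real k + (1+s) * real (N-k))) \<noteq> 0" by linarith
next
  fix ds0 a1 a2 a3 assume h: "ds0 \<in> set_pmf (paths N s n Y0)" "ypath Y0 ds0 = take (Suc n) ys"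
  note ev = ev_facts[OF N1 s Y0 poss_len[OF N1 s poss] h]
  have ck: "card (Yset Y0 ds0) = k" using ev k by simp
  show "measure_pmf.expectation (draw_pmf N s (Yset Y0 ds0))
        (\<lambda>d. if card (step (Yset Y0 ds0) d) = ys ! Suc n then a1 * XiA N Y0 (ds0 @ [d]) + a2 * XiB N Y0 (ds0 @ [d]) + a3 else 0)
      = real k * real (N - k) / (real N * (real k + (1+s) * real (N-k))) *
        (a1 * ((if 1 < k then 1 else 0) * XiA N Y0 ds0 + 0 * XiB N Y0 ds0)
         + a2 * (real k / (2 * real N * real (N - k + 1)) * XiA N Y0 ds0 + (1 - real k / (2 * real N * real (N - k + 1))) * XiB N Y0 ds0) + a3)"
    unfolding nx XiA_snoc XiB_snoc
    by (subst down_draw[OF N1 s conjunct1[OF ev] ck k(2,3)]) (simp add: XiA_eq XiB_eq ck)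
qed

lemma stay_case:
  assumes N1: "N \<ge> 1" and s: "s > 0" and Y0: "Y0 \<subseteq> {1..N}"
    and poss: "possible N s Y0 (Suc n) ys" and k: "ys ! n = k" "1 \<le> k" "k < N" and nx: "ys ! Suc n = k"
  defines "p \<equiv> real k ^ 2 / (real k ^ 2 + (1 + s) * real (N - k) ^ 2)"
    and "q \<equiv> (1 + s) * real (N - k) ^ 2 / (real k ^ 2 + (1 + s) * real (N - k) ^ 2)"
    and "c \<equiv> real (N - k) / (2 * real k * real N)"
    and "d \<equiv> real k / (2 * real N * real (N - k))"
  shows "Ucond N s Y0 (Suc n) ys = (p * (1 - c) + q) * Ucond N s Y0 n (take (Suc n) ys)
          + p * c * Vcond N s Y0 n (take (Suc n) ys)
      \<and> Vcond N s Y0 (Suc n) ys = q * d * Ucond N s Y0 n (take (Suc n) ys)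
          + (p + q * (1 - d)) * Vcond N s Y0 n (take (Suc n) ys)"
proof (rule assemble[OF N1 s poss_len[OF N1 s poss] poss])
  have a: "(1+s) * real (N - k) ^ 2 > 0" "(1+s) * real (N - k) > 0" "real k ^ 2 \<ge> 0" using s k by auto
  have "real k + (1+s) * real (N-k) > 0" "real k ^ 2 + (1+s) * real (N - k) ^ 2 > 0" using a by linarith+
  moreover have "real N > 0" using k by auto
  ultimately have "(real k ^ 2 + (1+s) * real (N - k) ^ 2) / (real N * (real k + (1+s) * real (N-k))) > 0"
    using k s by (intro divide_pos_pos mult_pos_pos) auto
  then show "(real k ^ 2 + (1+s) * real (N - k) ^ 2) / (real N * (real k + (1+s) * real (N-k))) \<noteq> 0" by linarith
next
  fix ds0 a1 a2 a3 assume h: "ds0 \<in> set_pmf (paths N s n Y0)" "ypath Y0 ds0 = take (Suc n) ys"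
  note ev = ev_facts[OF N1 s Y0 poss_len[OF N1 s poss] h]
  have ck: "card (Yset Y0 ds0) = k" using ev k by simp
  have xa: "sum (Fof N Y0 ds0) (Yset Y0 ds0) / real k = XiA N Y0 ds0" using ck by (simp add: XiA_eq)
  have xb: "sum (Fof N Y0 ds0) ({1..N} - Yset Y0 ds0) / real (N - k) = XiB N Y0 ds0" using ck by (simp add: XiB_eq)
  show "measure_pmf.expectation (draw_pmf N s (Yset Y0 ds0))
        (\<lambda>d. if card (step (Yset Y0 ds0) d) = ys ! Suc n then a1 * XiA N Y0 (ds0 @ [d]) + a2 * XiB N Y0 (ds0 @ [d]) + a3 else 0)
      = (real k ^ 2 + (1+s) * real (N - k) ^ 2) / (real N * (real k + (1+s) * real (N-k))) *
        (a1 * ((p * (1 - c) + q) * XiA N Y0 ds0 + p * c * XiB N Y0 ds0)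
         + a2 * (q * d * XiA N Y0 ds0 + (p + q * (1 - d)) * XiB N Y0 ds0) + a3)"
    unfolding nx XiA_snoc XiB_snoc
    apply (subst stay_draw[OF N1 s conjunct1[OF ev] ck k(2,3)])
    apply (simp only: xa xb)
    apply (fold p_def q_def c_def d_def)
    apply (simp add: algebra_simps)
    done
qed


lemma ring1: "(U'::real) = (p*(1-c)+q)*U + p*c*V \<Longrightarrow> U' = p*((1-c)*U + c*V) + q*U"
  by (simp add: algebra_simps)
lemma ring2: "(V'::real) = q*d*U + (p + q*(1-d))*V \<Longrightarrow> V' = p*V + q*(d*U + (1-d)*V)"
  by (simp add: algebra_simps)

lemma card_step: "finite Y \<Longrightarrow> card (step Y d) \<le> card Y + 1 \<and> card Y \<le> card (step Y d) + 1"
  by (cases d) (auto simp: step_def card_insert_if card_Diff_singleton_if)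

theorem proposition3:
  fixes N :: nat and s :: real and Y0 :: "nat set"
  assumes hN: "N \<ge> 2" and hs: "s > 0" and hY0: "Y0 \<subseteq> {1..N}"
  shows
   "(\<forall>n k ys. possible N s Y0 (Suc n) ys \<and> ys ! n = k \<and> 1 \<le> k \<and> k \<le> N - 1 \<longrightarrow>
      (let U = Ucond N s Y0 n (take (Suc n) ys); V = Vcond N s Y0 n (take (Suc n) ys);
           U' = Ucond N s Y0 (Suc n) ys; V' = Vcond N s Y0 (Suc n) ys in
       (ys ! Suc n = k + 1 \<longrightarrow>
          (let a = real (N - k) / (2 * real N * real (k + 1)) in
             U' = (1 - a) * U + a * V \<and> (k + 1 < N \<longrightarrow> V' = V)))
     \<and> (ys ! Suc n = k - 1 \<longrightarrow>
          (let b = real k / (2 * real N * real (N - k + 1)) in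
             (1 < k \<longrightarrow> U' = U) \<and> V' = b * U + (1 - b) * V))
     \<and> (ys ! Suc n = k \<longrightarrow>
          (let p = real k ^ 2 / (real k ^ 2 + (1 + s) * real (N - k) ^ 2);
               q = (1 + s) * real (N - k) ^ 2 / (real k ^ 2 + (1 + s) * real (N - k) ^ 2);
               c = real (N - k) / (2 * real k * real N);
               d = real k / (2 * real N * real (N - k)) in
             U' = p * ((1 - c) * U + c * V) + q * U
           \<and> V' = p * V + q * (d * U + (1 - d) * V)))))
  \<and> (\<forall>n ys. possible N s Y0 (Suc n) ys \<and> ys ! Suc n = 0 \<and>
        (\<forall>j\<le>n. 0 < ys ! j \<and> ys ! j < N) \<longrightarrow>
      Vcond N s Y0 (Suc n) ys =
        1 / (2 * real N ^ 2) * Ucond N s Y0 n (take (Suc n) ys)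
        + (2 * real N ^ 2 - 1) / (2 * real N ^ 2) * Vcond N s Y0 n (take (Suc n) ys))
  \<and> (\<forall>n ys. possible N s Y0 (Suc n) ys \<and> ys ! Suc n = N \<and>
        (\<forall>j\<le>n. 0 < ys ! j \<and> ys ! j < N) \<longrightarrow>
      Ucond N s Y0 (Suc n) ys =
        (2 * real N ^ 2 - 1) / (2 * real N ^ 2) * Ucond N s Y0 n (take (Suc n) ys)
        + 1 / (2 * real N ^ 2) * Vcond N s Y0 n (take (Suc n) ys))"
  proof -
  have N1: "N \<ge> 1" using hN by simp
  have P1: "\<forall>n k ys. possible N s Y0 (Suc n) ys \<and> ys ! n = k \<and> 1 \<le> k \<and> k \<le> N - 1 \<longrightarrow>
      (let U = Ucond N s Y0 n (take (Suc n) ys); V = Vcond N s Y0 n (take (Suc n) ys);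
           U' = Ucond N s Y0 (Suc n) ys; V' = Vcond N s Y0 (Suc n) ys in
       (ys ! Suc n = k + 1 \<longrightarrow>
          (let a = real (N - k) / (2 * real N * real (k + 1)) in
             U' = (1 - a) * U + a * V \<and> (k + 1 < N \<longrightarrow> V' = V)))
     \<and> (ys ! Suc n = k - 1 \<longrightarrow>
          (let b = real k / (2 * real N * real (N - k + 1)) in
             (1 < k \<longrightarrow> U' = U) \<and> V' = b * U + (1 - b) * V))
     \<and> (ys ! Suc n = k \<longrightarrow>
          (let p = real k ^ 2 / (real k ^ 2 + (1 + s) * real (N - k) ^ 2);
               q = (1 + s) * real (N - k) ^ 2 / (real k ^ 2 + (1 + s) * real (N - k) ^ 2);
               c = real (N - k) / (2 * real k * real N);
               d = real k / (2 * real N * real (N - k)) in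
             U' = p * ((1 - c) * U + c * V) + q * U
           \<and> V' = p * V + q * (d * U + (1 - d) * V))))"
  proof (intro allI impI)
    fix n k ys assume H: "possible N s Y0 (Suc n) ys \<and> ys ! n = k \<and> 1 \<le> k \<and> k \<le> N - 1"
    then have poss: "possible N s Y0 (Suc n) ys" and k: "ys ! n = k" "1 \<le> k" "k < N" using hN by auto
    show "let U = Ucond N s Y0 n (take (Suc n) ys); V = Vcond N s Y0 n (take (Suc n) ys);
           U' = Ucond N s Y0 (Suc n) ys; V' = Vcond N s Y0 (Suc n) ys in
       (ys ! Suc n = k + 1 \<longrightarrow>
          (let a = real (N - k) / (2 * real N * real (k + 1)) in
             U' = (1 - a) * U + a * V \<and> (k + 1 < N \<longrightarrow> V' = V)))
     \<and> (ys ! Suc n = k - 1 \<longrightarrow>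
          (let b = real k / (2 * real N * real (N - k + 1)) in
             (1 < k \<longrightarrow> U' = U) \<and> V' = b * U + (1 - b) * V))
     \<and> (ys ! Suc n = k \<longrightarrow>
          (let p = real k ^ 2 / (real k ^ 2 + (1 + s) * real (N - k) ^ 2);
               q = (1 + s) * real (N - k) ^ 2 / (real k ^ 2 + (1 + s) * real (N - k) ^ 2);
               c = real (N - k) / (2 * real k * real N);
               d = real k / (2 * real N * real (N - k)) in
             U' = p * ((1 - c) * U + c * V) + q * U
           \<and> V' = p * V + q * (d * U + (1 - d) * V)))"
      unfolding Let_def
    proof (intro conjI impI)
      assume nx: "ys ! Suc n = k + 1"
      note r = up_case[OF N1 hs hY0 poss k nx]
      then show "Ucond N s Y0 (Suc n) ys = (1 - real (N - k) / (2 * real N * real (k + 1))) * Ucond N s Y0 n (take (Suc n) ys) +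
        real (N - k) / (2 * real N * real (k + 1)) * Vcond N s Y0 n (take (Suc n) ys)" by blast
      assume "k + 1 < N"
      then show "Vcond N s Y0 (Suc n) ys = Vcond N s Y0 n (take (Suc n) ys)" using r by simp
    next
      assume nx: "ys ! Suc n = k - 1"
      note r = down_case[OF N1 hs hY0 poss k nx]
      {
        assume "1 < k"
        then show "Ucond N s Y0 (Suc n) ys = Ucond N s Y0 n (take (Suc n) ys)" using r by simp
      }
      show "Vcond N s Y0 (Suc n) ys =
        real k / (2 * real N * real (N - k + 1)) * Ucond N s Y0 n (take (Suc n) ys) +
        (1 - real k / (2 * real N * real (N - k + 1))) * Vcond N s Y0 n (take (Suc n) ys)" using r by blast
    next
      assume nx: "ys ! Suc n = k"
      note r = stay_case[OF N1 hs hY0 poss k nx]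
      show "Ucond N s Y0 (Suc n) ys =
        real k ^ 2 / (real k ^ 2 + (1 + s) * real (N - k) ^ 2) *
        ((1 - real (N - k) / (2 * real k * real N)) * Ucond N s Y0 n (take (Suc n) ys) +
         real (N - k) / (2 * real k * real N) * Vcond N s Y0 n (take (Suc n) ys)) +
        (1 + s) * real (N - k) ^ 2 / (real k ^ 2 + (1 + s) * real (N - k) ^ 2) * Ucond N s Y0 n (take (Suc n) ys)"
        by (rule ring1[OF conjunct1[OF r]])
      show "Vcond N s Y0 (Suc n) ys =
        real k ^ 2 / (real k ^ 2 + (1 + s) * real (N - k) ^ 2) * Vcond N s Y0 n (take (Suc n) ys) +
        (1 + s) * real (N - k) ^ 2 / (real k ^ 2 + (1 + s) * real (N - k) ^ 2) *
        (real k / (2 * real N * real (N - k)) * Ucond N s Y0 n (take (Suc n) ys) +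
         (1 - real k / (2 * real N * real (N - k))) * Vcond N s Y0 n (take (Suc n) ys))"
        by (rule ring2[OF conjunct2[OF r]])
    qed
  qed
  have prevk: "card (Yset Y0 ds0) = ys ! n \<and> card (step (Yset Y0 ds0) d) = ys ! Suc n \<and> finite (Yset Y0 ds0)"
    if "ds0 \<in> set_pmf (paths N s n Y0)" "ypath Y0 ds0 = take (Suc n) ys" "card (step (Yset Y0 ds0) d) = ys ! Suc n"
       "possible N s Y0 (Suc n) ys" for n ys ds0 d
    using ev_facts[OF N1 hs hY0 poss_len[OF N1 hs that(4)] that(1,2)] that(3) finite_subset by blast
  have P2: "\<forall>n ys. possible N s Y0 (Suc n) ys \<and> ys ! Suc n = 0 \<and>
        (\<forall>j\<le>n. 0 < ys ! j \<and> ys ! j < N) \<longrightarrow>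
      Vcond N s Y0 (Suc n) ys =
        1 / (2 * real N ^ 2) * Ucond N s Y0 n (take (Suc n) ys)
        + (2 * real N ^ 2 - 1) / (2 * real N ^ 2) * Vcond N s Y0 n (take (Suc n) ys)"
  proof (intro allI impI)
    fix n ys assume H: "possible N s Y0 (Suc n) ys \<and> ys ! Suc n = 0 \<and> (\<forall>j\<le>n. 0 < ys ! j \<and> ys ! j < N)"
    obtain ds0 d where h: "ds0 \<in> set_pmf (paths N s n Y0)" "ypath Y0 ds0 = take (Suc n) ys" "card (step (Yset Y0 ds0) d) = ys ! Suc n"
      using possible_prev[OF N1 hs poss_len[OF N1 hs conjunct1[OF H]] conjunct1[OF H]] by blast
    note pk = prevk[OF h conjunct1[OF H]]
    have "ys ! n = 1" using pk card_step[of "Yset Y0 ds0" d] H by force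
    moreover have "1 \<le> (1::nat)" "1 < N" "ys ! Suc n = 1 - 1" using hN H by auto
    ultimately have r: "Vcond N s Y0 (Suc n) ys = real 1 / (2 * real N * real (N - 1 + 1)) * Ucond N s Y0 n (take (Suc n) ys)
          + (1 - real 1 / (2 * real N * real (N - 1 + 1))) * Vcond N s Y0 n (take (Suc n) ys)"
      using down_case[OF N1 hs hY0 conjunct1[OF H]] by blast
    have r2: "Vcond N s Y0 (Suc n) ys = 1 / (2 * real N * real N) * Ucond N s Y0 n (take (Suc n) ys)
          + (1 - 1 / (2 * real N * real N)) * Vcond N s Y0 n (take (Suc n) ys)"
      using r H hN by simp
    have "(1 - 1 / (2 * real N * real N)) = (2 * real N ^ 2 - 1) / (2 * real N ^ 2)"
      using hN by (simp add: field_simps power2_eq_square)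
    then show "Vcond N s Y0 (Suc n) ys =
        1 / (2 * real N ^ 2) * Ucond N s Y0 n (take (Suc n) ys)
        + (2 * real N ^ 2 - 1) / (2 * real N ^ 2) * Vcond N s Y0 n (take (Suc n) ys)"
      using r2 by (simp add: power2_eq_square)
  qed
  have P3: "\<forall>n ys. possible N s Y0 (Suc n) ys \<and> ys ! Suc n = N \<and>
        (\<forall>j\<le>n. 0 < ys ! j \<and> ys ! j < N) \<longrightarrow>
      Ucond N s Y0 (Suc n) ys =
        (2 * real N ^ 2 - 1) / (2 * real N ^ 2) * Ucond N s Y0 n (take (Suc n) ys)
        + 1 / (2 * real N ^ 2) * Vcond N s Y0 n (take (Suc n) ys)"
  proof (intro allI impI)
    fix n ys assume H: "possible N s Y0 (Suc n) ys \<and> ys ! Suc n = N \<and> (\<forall>j\<le>n. 0 < ys ! j \<and> ys ! j < N)"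
    obtain ds0 d where h: "ds0 \<in> set_pmf (paths N s n Y0)" "ypath Y0 ds0 = take (Suc n) ys" "card (step (Yset Y0 ds0) d) = ys ! Suc n"
      using possible_prev[OF N1 hs poss_len[OF N1 hs conjunct1[OF H]] conjunct1[OF H]] by blast
    note pk = prevk[OF h conjunct1[OF H]]
    have yn: "ys ! n = N - 1" using pk card_step[of "Yset Y0 ds0" d] H by force
    have k1: "1 \<le> N - 1" "N - 1 < N" using hN by auto
    have nx: "ys ! Suc n = N - 1 + 1" using H hN by simp
    note r = up_case[OF N1 hs hY0 conjunct1[OF H] yn k1 nx]
    have e: "real (N - (N - 1)) = 1" "real (N - 1 + 1) = real N" using hN by auto
    have r2: "Ucond N s Y0 (Suc n) ys = (1 - 1 / (2 * real N * real N)) * Ucond N s Y0 n (take (Suc n) ys)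
          + 1 / (2 * real N * real N) * Vcond N s Y0 n (take (Suc n) ys)"
      using r unfolding e by simp
    have "(1 - 1 / (2 * real N * real N)) = (2 * real N ^ 2 - 1) / (2 * real N ^ 2)"
      using hN by (simp add: field_simps power2_eq_square)
    then show "Ucond N s Y0 (Suc n) ys =
        (2 * real N ^ 2 - 1) / (2 * real N ^ 2) * Ucond N s Y0 n (take (Suc n) ys)
        + 1 / (2 * real N ^ 2) * Vcond N s Y0 n (take (Suc n) ys)"
      using r2 by (simp add: power2_eq_square)
  qed
  show ?thesis using P1 P2 P3 by blast
qed

end
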